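(* Let $\mathbf{A}',\mathbf{A}'',\mathbf{B}',\mathbf{B}''$ be $n\times n$ Hermitian non-negative definite matrices such that either $\mathbf{A}'\neq\mathbf{A}''$ or $\mathbf{B}'\neq\mathbf{B}''$. Assume that the Loewner order is total on each of the pairs $(\mathbf{A}',\mathbf{A}'')$ and $(\mathbf{B}',\mathbf{B}'')$, i.e., either $\mathbf{A}'\succeq\mathbf{A}''$ or $\mathbf{A}''\succ\mathbf{A}'$, and either $\mathbf{B}'\succeq\mathbf{B}''$ or $\mathbf{B}''\succ\mathbf{B}'$. Define $\mathbf{M}=(\mathbf{A}''-\mathbf{A}')\left[(\mathbf{I}+\mathbf{A}')^{-1}-(\mathbf{I}+\mathbf{A}'')^{-1}\right]$ and $\mathbf{N}=(\mathbf{B}''-\mathbf{B}')\left[(\mathbf{I}+\mathbf{B}'+\mathbf{A}')^{-1}-(\mathbf{I}+\mathbf{B}''+\mathbf{A}'')^{-1}\right]$. Then $\mathrm{Tr}(\mathbf{M}+\mathbf{N})\ge 0$.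
   Context: $\succeq$ denotes the Loewner order on Hermitian matrices: $\mathbf{X}\succeq\mathbf{Y}$ iff $\mathbf{X}-\mathbf{Y}$ is positive semidefinite; $\mathbf{X}\succ\mathbf{Y}$ iff $\mathbf{X}-\mathbf{Y}$ is positive definite. *)

theory Defs
  imports "HOL-Analysis.Analysis" "HOL-Library.Complex_Order"
begin

definition adjoint_mat :: "complex^'n^'n \<Rightarrow> complex^'n^'n" where
  "adjoint_mat A = (\<chi> i j. cnj (A $ j $ i))"

definition hermitian :: "complex^'n^'n \<Rightarrow> bool" where
  "hermitian A \<longleftrightarrow> adjoint_mat A = A"

definition qform :: "complex^'n^'n \<Rightarrow> complex^'n \<Rightarrow> complex" where
  "qform A x = (\<Sum>i\<in>UNIV. cnj (x $ i) * (A *v x) $ i)"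

text \<open>Positive semidefinite (non-negative definite) and positive definite, via the
  complex order of Complex_Order (so 0 <= z means z is real and non-negative).\<close>
definition psd :: "complex^'n^'n \<Rightarrow> bool" where
  "psd A \<longleftrightarrow> (\<forall>x. 0 \<le> qform A x)"

definition pd :: "complex^'n^'n \<Rightarrow> bool" where
  "pd A \<longleftrightarrow> (\<forall>x. x \<noteq> 0 \<longrightarrow> 0 < qform A x)"

definition loewner_ge :: "complex^'n^'n \<Rightarrow> complex^'n^'n \<Rightarrow> bool" where
  "loewner_ge X Y \<longleftrightarrow> psd (X - Y)"

definition loewner_gt :: "complex^'n^'n \<Rightarrow> complex^'n^'n \<Rightarrow> bool" where
  "loewner_gt X Y \<longleftrightarrow> pd (X - Y)"

end

theory Submission
  imports Defs
begin


definition sesq :: "complex^'n^'n \<Rightarrow> complex^'n \<Rightarrow> complex^'n \<Rightarrow> complex" where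
  "sesq A x y = (\<Sum>i\<in>UNIV. cnj (x $ i) * (A *v y) $ i)"

lemma qform_sesq: "qform A x = sesq A x x" by (simp add: qform_def sesq_def)

lemma sesq_expand: "sesq A x y = (\<Sum>i\<in>UNIV. \<Sum>j\<in>UNIV. cnj (x $ i) * A $ i $ j * y $ j)"
  by (simp add: sesq_def matrix_vector_mult_def sum_distrib_left mult.assoc)

lemma sesq_add_left: "sesq A (x + y) z = sesq A x z + sesq A y z"
  by (simp add: sesq_def distrib_right sum.distrib)
lemma sesq_add_right: "sesq A x (y + z) = sesq A x y + sesq A x z"
  by (simp add: sesq_def matrix_vector_right_distrib distrib_left sum.distrib)
lemma sesq_scale_left: "sesq A (c *s x) y = cnj c * sesq A x y"
  by (simp add: sesq_def sum_distrib_left mult.assoc)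
lemma sesq_scale_right: "sesq A x (c *s y) = c * sesq A x y"
  by (simp add: sesq_expand sum_distrib_left mult_ac)
lemma sesq_add_mat: "sesq (A + B) x y = sesq A x y + sesq B x y"
  by (simp add: sesq_expand distrib_left distrib_right sum.distrib)
lemma sesq_diff_mat: "sesq (A - B) x y = sesq A x y - sesq B x y"
  by (simp add: sesq_expand left_diff_distrib right_diff_distrib sum_subtractf)
lemma sesq_axis_left: "sesq A (axis i 1) y = (A *v y) $ i"
proof -
  have "\<And>k. cnj (axis i 1 $ k) * (A *v y) $ k = (if k = i then (A *v y) $ k else 0)"
    by (simp add: axis_def)
  then show ?thesis by (simp add: sesq_def)
qed
lemma mv_axis: "(A *v axis j 1) $ i = A $ i $ j"
proof -
  have "\<And>k. A $ i $ k * axis j 1 $ k = (if k = j then A $ i $ k else 0)"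
    by (simp add: axis_def)
  then show ?thesis by (simp add: matrix_vector_mult_def)
qed
lemma sesq_axis_axis: "sesq A (axis i 1) (axis j 1) = A $ i $ j"
  by (simp add: sesq_axis_left mv_axis)
lemma sesq_axis_right: "sesq A x (axis j 1) = (\<Sum>k\<in>UNIV. cnj (x $ k) * A $ k $ j)"
  by (simp add: sesq_expand axis_def if_distrib cong: if_cong)

lemma hermitian_entry: "hermitian A \<Longrightarrow> A $ j $ i = cnj (A $ i $ j)"
  unfolding hermitian_def adjoint_mat_def by (metis vec_lambda_beta complex_cnj_cnj)

lemma sesq_herm_swap: assumes "hermitian A" shows "sesq A y x = cnj (sesq A x y)"
proof -
  have "sesq A y x = (\<Sum>j\<in>UNIV. \<Sum>i\<in>UNIV. cnj (y $ j) * A $ j $ i * x $ i)" by (simp add: sesq_expand)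
  also have "\<dots> = (\<Sum>i\<in>UNIV. \<Sum>j\<in>UNIV. cnj (y $ j) * A $ j $ i * x $ i)" by (rule sum.swap)
  also have "\<dots> = cnj (sesq A x y)"
  proof -
    have "\<And>i j. cnj (y $ j) * A $ j $ i * x $ i = cnj (cnj (x $ i) * A $ i $ j * y $ j)"
      by (subst hermitian_entry[OF assms]) (simp add: mult_ac)
    then show ?thesis by (simp only: sesq_expand cnj_sum)
  qed
  finally show ?thesis .
qed



lemma adjoint_mult: "adjoint_mat (A ** B) = adjoint_mat B ** adjoint_mat A"
  by (simp add: adjoint_mat_def matrix_matrix_mult_def vec_eq_iff cnj_sum mult.commute)
lemma adjoint_add: "adjoint_mat (A + B) = adjoint_mat A + adjoint_mat B"
  by (simp add: adjoint_mat_def vec_eq_iff)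
lemma adjoint_diff: "adjoint_mat (A - B) = adjoint_mat A - adjoint_mat B"
  by (simp add: adjoint_mat_def vec_eq_iff)
lemma adjoint_one: "adjoint_mat (mat 1) = mat 1"
  by (simp add: adjoint_mat_def vec_eq_iff mat_def)
lemma hermitian_add: "hermitian A \<Longrightarrow> hermitian B \<Longrightarrow> hermitian (A + B)"
  by (simp add: hermitian_def adjoint_add)
lemma hermitian_diff: "hermitian A \<Longrightarrow> hermitian B \<Longrightarrow> hermitian (A - B)"
  by (simp add: hermitian_def adjoint_diff)
lemma hermitian_one: "hermitian (mat 1)"
  by (simp add: hermitian_def adjoint_one)
lemma hermitian_sandwich: "hermitian K \<Longrightarrow> hermitian H \<Longrightarrow> hermitian (K ** H ** K)"
  by (simp add: hermitian_def adjoint_mult matrix_mul_assoc)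

lemma matrix_diff_ldistrib: "(A::'a::comm_ring_1^'n^'n) ** (B - C) = A ** B - A ** C"
  by (simp add: matrix_matrix_mult_def vec_eq_iff algebra_simps sum_subtractf)
lemma matrix_diff_rdistrib: "((A::'a::comm_ring_1^'n^'n) - B) ** C = A ** C - B ** C"
  by (simp add: matrix_matrix_mult_def vec_eq_iff algebra_simps sum_subtractf)
lemma matrix_add_rdistrib: "((A::'a::comm_ring_1^'n^'n) + B) ** C = A ** C + B ** C"
  by (simp add: matrix_matrix_mult_def vec_eq_iff algebra_simps sum.distrib)

lemma sesq_mult_right: "sesq (H ** K) x y = sesq H x (K *v y)"
  by (simp add: sesq_def matrix_vector_mul_assoc)

lemma sesq_adj_left: "sesq (adjoint_mat K ** H) x y = sesq H (K *v x) y"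
proof -
  have "sesq (adjoint_mat K ** H) x y = sesq (adjoint_mat K) x (H *v y)"
    by (rule sesq_mult_right)
  also have "\<dots> = (\<Sum>i\<in>UNIV. cnj (x $ i) * (\<Sum>j\<in>UNIV. cnj (K $ j $ i) * (H *v y) $ j))"
    by (simp add: sesq_def adjoint_mat_def matrix_vector_mult_def)
  also have "\<dots> = (\<Sum>i\<in>UNIV. \<Sum>j\<in>UNIV. cnj (x $ i) * cnj (K $ j $ i) * (H *v y) $ j)"
    by (simp add: sum_distrib_left mult.assoc)
  also have "\<dots> = (\<Sum>j\<in>UNIV. \<Sum>i\<in>UNIV. cnj (x $ i) * cnj (K $ j $ i) * (H *v y) $ j)"
    by (rule sum.swap)
  also have "\<dots> = sesq H (K *v x) y"
  proof -
    have "\<And>j. cnj ((K *v x) $ j) = (\<Sum>i\<in>UNIV. cnj (x $ i) * cnj (K $ j $ i))"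
      by (simp add: matrix_vector_mult_def cnj_sum mult.commute)
    then show ?thesis by (simp only: sesq_def sum_distrib_right)
  qed
  finally show ?thesis .
qed

lemma psd_sandwich_adj: "psd H \<Longrightarrow> psd (adjoint_mat K ** H ** K)"
proof -
  assume "psd H"
  have "sesq (adjoint_mat K ** H ** K) x x = sesq H (K *v x) (K *v x)" for x
    by (simp only: sesq_mult_right[of "adjoint_mat K ** H" K] sesq_adj_left)
  then show ?thesis using \<open>psd H\<close> by (simp add: psd_def qform_sesq)
qed
lemma psd_sandwich: "psd H \<Longrightarrow> hermitian K \<Longrightarrow> psd (K ** H ** K)"
  using psd_sandwich_adj[of H K] by (simp add: hermitian_def)

lemma psd_add: "psd A \<Longrightarrow> psd B \<Longrightarrow> psd (A + B)"
  by (simp add: psd_def qform_sesq sesq_add_mat)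

lemma qform_one: "qform (mat 1) x = (\<Sum>i\<in>UNIV. cnj (x $ i) * x $ i)"
  by (simp add: qform_def)

lemma cnj_mult_self_ge: "0 \<le> cnj z * (z::complex)"
  by (simp add: less_eq_complex_def)

lemma psd_one: "psd (mat 1)"
  unfolding psd_def qform_one by (simp add: sum_nonneg cnj_mult_self_ge)

lemma invertible_one_plus:
  assumes "psd A" shows "invertible (mat 1 + A)"
proof -
  have "x = 0" if "(mat 1 + A) *v x = 0" for x
  proof -
    have "qform (mat 1 + A) x = 0" using that by (simp add: qform_def)
    then have e: "qform (mat 1) x + qform A x = 0" by (simp add: qform_sesq sesq_add_mat)
    have "0 \<le> qform A x" using assms psd_def by blast
    moreover have "0 \<le> qform (mat 1) x" using psd_one psd_def by blast
    ultimately have z: "qform (mat 1) x = 0" using e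
      by (metis add_nonneg_eq_0_iff)
    have "\<forall>i\<in>UNIV. cnj (x $ i) * x $ i = 0"
      using z unfolding qform_one
      by (subst sum_nonneg_eq_0_iff[symmetric]) (auto simp: cnj_mult_self_ge)
    then show "x = 0" by (simp add: vec_eq_iff)
  qed
  then show ?thesis
    by (simp add: invertible_left_inverse matrix_left_invertible_ker)
qed

lemma matrix_inv_props:
  assumes "invertible (H::complex^'n^'n)"
  shows "H ** matrix_inv H = mat 1" "matrix_inv H ** H = mat 1"
proof -
  have "H ** matrix_inv H = mat 1 \<and> matrix_inv H ** H = mat 1"
    using assms unfolding invertible_def matrix_inv_def by (rule someI_ex)
  then show "H ** matrix_inv H = mat 1" "matrix_inv H ** H = mat 1" by auto
qed

lemma hermitian_inv:
  assumes "invertible H" "hermitian H" shows "hermitian (matrix_inv H)"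
proof -
  let ?P = "matrix_inv H"
  have "adjoint_mat (?P ** H) = mat 1" using matrix_inv_props(2)[OF assms(1)] adjoint_one by simp
  then have "H ** adjoint_mat ?P = mat 1" using assms(2) by (simp add: adjoint_mult hermitian_def)
  then have "?P ** (H ** adjoint_mat ?P) = ?P" by simp
  then have "(?P ** H) ** adjoint_mat ?P = ?P" by (simp add: matrix_mul_assoc)
  then have "adjoint_mat ?P = ?P"
    by (simp add: matrix_inv_props(2)[OF assms(1)])
  then show ?thesis by (simp add: hermitian_def)
qed

lemma psd_inv:
  assumes "invertible H" "hermitian H" "psd H" shows "psd (matrix_inv H)"
proof -
  let ?P = "matrix_inv H"
  have "?P ** H ** ?P = ?P" by (simp add: matrix_inv_props(2)[OF assms(1)])
  then show ?thesis using psd_sandwich[OF assms(3) hermitian_inv[OF assms(1,2)]] by simp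
qed

lemma psd_inv_mono:
  assumes "invertible H1" "hermitian H1" "psd H1"
    and "invertible H2" "hermitian H2" "psd (H2 - H1)"
  shows "psd (matrix_inv H1 - matrix_inv H2)"
proof -
  let ?P1 = "matrix_inv H1" and ?P2 = "matrix_inv H2"
  have h1: "hermitian ?P1" and h2: "hermitian ?P2" using hermitian_inv assms by auto
  have i1: "?P1 ** H1 = mat 1" "H1 ** ?P1 = mat 1" using matrix_inv_props assms(1) by auto
  have i2: "?P2 ** H2 = mat 1" "H2 ** ?P2 = mat 1" using matrix_inv_props assms(4) by auto
  have a: "?P1 ** H1 ** ?P1 = ?P1" using i1 by simp
  have b: "?P1 ** H1 ** ?P2 = ?P2" using i1 by simp
  have c: "?P2 ** H1 ** ?P1 = ?P2" using i1 by (metis matrix_mul_assoc matrix_mul_rid)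
  have d: "?P2 ** H2 ** ?P2 = ?P2" using i2 by simp
  have eq: "?P1 - ?P2 = (?P1 - ?P2) ** H1 ** (?P1 - ?P2) + ?P2 ** (H2 - H1) ** ?P2"
    by (simp only: matrix_diff_ldistrib matrix_diff_rdistrib a b c d) (simp add: algebra_simps)
  show ?thesis
    by (subst eq, rule psd_add, rule psd_sandwich[OF assms(3)], rule hermitian_diff[OF h1 h2],
        rule psd_sandwich[OF assms(6) h2])
qed

lemma cnj_trace_mult: "cnj (trace (A ** B)) = trace (adjoint_mat B ** adjoint_mat A)"
proof -
  have "cnj (trace (A ** B)) = (\<Sum>i\<in>UNIV. \<Sum>k\<in>UNIV. cnj (A $ i $ k) * cnj (B $ k $ i))"
    by (simp add: trace_def matrix_matrix_mult_def cnj_sum)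
  also have "\<dots> = trace (adjoint_mat B ** adjoint_mat A)"
    by (simp add: trace_def matrix_matrix_mult_def adjoint_mat_def mult.commute)
  finally show ?thesis .
qed



lemma qform_axis: "qform L (axis i 1) = L $ i $ i"
  by (simp add: qform_sesq sesq_axis_axis)

lemma cdiv_nonneg: "0 \<le> (x::complex) \<Longrightarrow> 0 < c \<Longrightarrow> 0 \<le> x / c"
  by (auto simp: less_eq_complex_def less_complex_def Re_divide Im_divide)

lemma col_zero:
  assumes "psd L" "hermitian L" "L $ i $ i = 0"
  shows "L $ j $ i = 0"
proof (rule ccontr)
  assume an: "L $ j $ i \<noteq> 0"
  define a where "a = L $ j $ i"
  define d where "d = L $ j $ j"
  have d0: "0 \<le> d" using assms(1) qform_axis unfolding psd_def d_def by metis
  define dr where "dr = Re d"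
  have ddr: "d = complex_of_real dr" using d0 unfolding dr_def
    by (simp add: less_eq_complex_def complex_eq_iff)
  have dr0: "0 \<le> dr" using d0 by (simp add: dr_def less_eq_complex_def)
  define s where "s = 1 / (dr + 1)"
  have s0: "0 < s" using dr0 by (simp add: s_def)
  have sdr: "s * dr < 1" using dr0 by (simp add: s_def field_simps)
  define t where "t = - complex_of_real s * a"
  define v where "v = axis i 1 + t *s axis j 1"
  have lij: "L $ i $ j = cnj a" using hermitian_entry[OF assms(2), of i j] by (simp add: a_def)
  have "qform L v = L $ i $ i + t * L $ i $ j + cnj t * L $ j $ i + cnj t * t * L $ j $ j"
    by (simp add: v_def qform_sesq sesq_add_left sesq_add_right sesq_scale_left sesq_scale_right
        sesq_axis_axis algebra_simps)
  also have "\<dots> = complex_of_real (s * s * dr - 2 * s) * (a * cnj a)"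
    using assms(3) lij
    by (simp add: t_def a_def[symmetric] d_def[symmetric] ddr algebra_simps del: complex_mult_cnj)
  also have "\<dots> = complex_of_real ((Re a ^ 2 + Im a ^ 2) * (s * s * dr - 2 * s))"
    by (simp only: complex_mult_cnj of_real_mult[symmetric] mult.commute)
  finally have q: "qform L v = complex_of_real ((Re a ^ 2 + Im a ^ 2) * (s * s * dr - 2 * s))" .
  have n: "0 < Re a ^ 2 + Im a ^ 2" using an complex_neq_0 unfolding a_def by blast
  have "s * s * dr - 2 * s < 0"
  proof -
    have "s * (s * dr) - 2 * s < 0" using s0 sdr
      by (smt (verit) mult_less_cancel_left2 mult_nonneg_nonneg)
    then show ?thesis by (simp add: mult.assoc)
  qed
  then have "(Re a ^ 2 + Im a ^ 2) * (s * s * dr - 2 * s) < 0" using n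
    by (simp add: mult_pos_neg)
  moreover have "0 \<le> qform L v" using assms(1) psd_def by blast
  ultimately show False using q by (simp add: less_eq_complex_def)
qed



lemma schur_step:
  assumes "psd L" "hermitian L" "L $ i $ i \<noteq> 0"
  defines "c \<equiv> L $ i $ i"
  defines "L' \<equiv> (\<chi> k l. L $ k $ l - L $ k $ i * L $ i $ l / c)"
  shows "psd L'" "hermitian L'"
    "\<And>W. trace (W ** L) = trace (W ** L') + qform W (\<chi> l. L $ l $ i) / c"
    "\<And>l. L' $ i $ l = 0" "\<And>k. L' $ k $ i = 0"
    "\<And>k l. L' $ k $ l = 0 \<or> L $ k $ l \<noteq> 0 \<or> L $ k $ i \<noteq> 0 \<and> L $ i $ l \<noteq> 0"
proof -
  have cc: "cnj c = c" using hermitian_entry[OF assms(2), of i i] by (simp add: c_def)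
  have cne: "c \<noteq> 0" using assms(3) c_def by simp
  have he: "\<And>k l. L $ k $ l = cnj (L $ l $ k)" using hermitian_entry[OF assms(2)] by blast
  show "\<And>l. L' $ i $ l = 0" "\<And>k. L' $ k $ i = 0" using cne by (simp_all add: L'_def c_def)
  show "\<And>k l. L' $ k $ l = 0 \<or> L $ k $ l \<noteq> 0 \<or> L $ k $ i \<noteq> 0 \<and> L $ i $ l \<noteq> 0"
    by (auto simp: L'_def)
  have he': "\<And>k l. cnj (L $ l $ k) = L $ k $ l" by (metis he complex_cnj_cnj)
  show "hermitian L'"
    unfolding hermitian_def adjoint_mat_def vec_eq_iff
    by (simp add: L'_def cc he' mult.commute)
  define U where "U = (\<chi> k l. L $ k $ i * L $ i $ l / c)"
  have LU: "L = L' + U" by (simp add: L'_def U_def vec_eq_iff)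
  show "trace (W ** L) = trace (W ** L') + qform W (\<chi> l. L $ l $ i) / c" for W
  proof -
    have "trace (W ** U) = (\<Sum>k\<in>UNIV. \<Sum>l\<in>UNIV. W $ k $ l * (L $ l $ i * L $ i $ k / c))"
      by (simp add: trace_def matrix_matrix_mult_def U_def)
    also have "\<dots> = qform W (\<chi> l. L $ l $ i) / c"
      by (simp add: qform_def matrix_vector_mult_def sum_divide_distrib sum_distrib_left
          he' mult_ac)
    finally show ?thesis by (simp add: LU matrix_add_ldistrib trace_add)
  qed
  show "psd L'" unfolding psd_def
  proof
    fix x
    define a where "a = sesq L (axis i 1) x"
    have qU: "qform U x = cnj a * a / c"
    proof -
      have "qform U x = (\<Sum>k\<in>UNIV. \<Sum>l\<in>UNIV. cnj (x $ k) * L $ k $ i * (L $ i $ l * x $ l) / c)"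
        by (simp add: qform_def matrix_vector_mult_def U_def sum_distrib_left mult_ac)
      also have "\<dots> = (\<Sum>k\<in>UNIV. cnj (x $ k) * L $ k $ i) * (\<Sum>l\<in>UNIV. L $ i $ l * x $ l) / c"
        by (simp add: sum_distrib_left sum_distrib_right sum_divide_distrib) (rule sum.swap)
      also have "\<dots> = sesq L x (axis i 1) * a / c"
        by (simp add: a_def sesq_axis_right sesq_axis_left matrix_vector_mult_def)
      also have "\<dots> = cnj a * a / c"
        using sesq_herm_swap[OF assms(2), of "axis i 1" x] by (simp add: a_def)
      finally show ?thesis .
    qed
    define t where "t = - a / c"
    have "qform L (x + t *s axis i 1) = qform L x + t * cnj a + cnj t * a + cnj t * t * c"
      using sesq_herm_swap[OF assms(2), of "axis i 1" x]
      by (simp add: qform_sesq sesq_add_left sesq_add_right sesq_scale_left sesq_scale_right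
          sesq_axis_axis a_def c_def algebra_simps)
    also have "\<dots> = qform L x - cnj a * a / c"
      using cne cc by (simp add: t_def field_simps power2_eq_square)
    also have "\<dots> = qform L' x"
      by (simp add: LU qform_sesq sesq_add_mat qU[unfolded qform_sesq])
    finally show "0 \<le> qform L' x" using assms(1) psd_def by metis
  qed
qed



lemma trace_psd_aux:
  fixes W :: "complex^'n^'n"
  assumes W: "psd W" and S: "finite S"
  shows "\<And>L. psd L \<Longrightarrow> hermitian L \<Longrightarrow> (\<forall>k l. k \<notin> S \<or> l \<notin> S \<longrightarrow> L $ k $ l = 0)
     \<Longrightarrow> 0 \<le> trace (W ** L)"
  using S
proof (induction S rule: finite_induct)
  case empty
  then have "L = 0" by (simp add: vec_eq_iff)
  then show ?case by (simp add: trace_def matrix_matrix_mult_def)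
next
  case (insert i S)
  have he: "\<And>k l. L $ k $ l = cnj (L $ l $ k)" using hermitian_entry[OF insert.prems(2)] by blast
  show ?case
  proof (cases "L $ i $ i = 0")
    case True
    have col: "\<And>j. L $ j $ i = 0" using col_zero[OF insert.prems(1,2) True] .
    have row: "\<And>j. L $ i $ j = 0" using col he by (metis complex_cnj_zero)
    have "\<forall>k l. k \<notin> S \<or> l \<notin> S \<longrightarrow> L $ k $ l = 0"
      using insert.prems(3) col row by (metis insertE)
    then show ?thesis using insert.IH insert.prems(1,2) by blast
  next
    case False
    define c where "c = L $ i $ i"
    define L' where "L' = (\<chi> k l. L $ k $ l - L $ k $ i * L $ i $ l / c)"
    note ss = schur_step[OF insert.prems(1,2) False, folded c_def, folded L'_def]
    have sup: "\<forall>k l. k \<notin> S \<or> l \<notin> S \<longrightarrow> L' $ k $ l = 0"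
    proof (intro allI impI)
      fix k l assume "k \<notin> S \<or> l \<notin> S"
      then consider "k = i" | "l = i" | "k \<notin> insert i S" | "l \<notin> insert i S" by auto
      then show "L' $ k $ l = 0"
      proof cases
        case 1 then show ?thesis using ss(4) by simp
      next
        case 2 then show ?thesis using ss(5) by simp
      next
        case 3 then show ?thesis using ss(6)[of k l] insert.prems(3) by auto
      next
        case 4 then show ?thesis using ss(6)[of k l] insert.prems(3) by auto
      qed
    qed
    have t1: "0 \<le> trace (W ** L')" using insert.IH ss(1,2) sup by blast
    have c0: "0 < c"
    proof -
      have "0 \<le> c" using insert.prems(1) qform_axis unfolding psd_def c_def by metis
      then show ?thesis using False c_def by auto
    qed
    have t2: "0 \<le> qform W (\<chi> l. L $ l $ i) / c"
      using cdiv_nonneg W c0 psd_def by blast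
    show ?thesis using ss(3)[of W] t1 t2 by simp
  qed
qed

lemma trace_psd_mult:
  fixes W L :: "complex^'n^'n"
  assumes "psd W" "psd L" "hermitian L"
  shows "0 \<le> trace (W ** L)"
  using trace_psd_aux[OF assms(1) finite[of UNIV] assms(2,3)] by simp



lemma inv_diff:
  fixes H1 H2 :: "complex^'n^'n"
  assumes "invertible H1" "invertible H2"
  shows "matrix_inv H1 - matrix_inv H2 = matrix_inv H1 ** (H2 - H1) ** matrix_inv H2"
proof -
  let ?P = "matrix_inv H1" and ?Q = "matrix_inv H2"
  have "?P ** H2 ** ?Q = ?P ** (H2 ** ?Q)" by (simp add: matrix_mul_assoc)
  then have a: "?P ** H2 ** ?Q = ?P" by (simp add: matrix_inv_props(1)[OF assms(2)])
  have b: "?P ** H1 ** ?Q = ?Q"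
    by (simp add: matrix_inv_props(2)[OF assms(1)])
  show ?thesis by (simp add: matrix_diff_ldistrib matrix_diff_rdistrib a b)
qed



theorem lemma1:
  fixes A' A'' B' B'' :: "complex^'n^'n"
  assumes "hermitian A'" "psd A'"
    and "hermitian A''" "psd A''"
    and "hermitian B'" "psd B'"
    and "hermitian B''" "psd B''"
    and "A' \<noteq> A'' \<or> B' \<noteq> B''"
    and "loewner_ge A' A'' \<or> loewner_gt A'' A'"
    and "loewner_ge B' B'' \<or> loewner_gt B'' B'"
  shows "0 \<le> trace ((A'' - A') ** (matrix_inv (mat 1 + A') - matrix_inv (mat 1 + A''))
             + (B'' - B') ** (matrix_inv (mat 1 + B' + A') - matrix_inv (mat 1 + B'' + A'')))"
proof -
  define X where "X = A'' - A'"
  define Y where "Y = B'' - B'"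
  define Z where "Z = X + Y"
  define H1 where "H1 = mat 1 + A'"
  define H2 where "H2 = mat 1 + A''"
  define H3 where "H3 = mat 1 + B' + A'"
  define H4 where "H4 = mat 1 + B'' + A''"
  define P where "P = matrix_inv H1"
  define Q where "Q = matrix_inv H2"
  define R where "R = matrix_inv H3"
  define S where "S = matrix_inv H4"
  have hX: "hermitian X" using assms by (simp add: X_def hermitian_diff)
  have hY: "hermitian Y" using assms by (simp add: Y_def hermitian_diff)
  have hZ: "hermitian Z" using hX hY by (simp add: Z_def hermitian_add)
  have hH1: "hermitian H1" "psd H1" "invertible H1"
    using assms by (simp_all add: H1_def hermitian_add hermitian_one psd_add psd_one invertible_one_plus)
  have hH2: "hermitian H2" "psd H2" "invertible H2"
    using assms by (simp_all add: H2_def hermitian_add hermitian_one psd_add psd_one invertible_one_plus)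
  have p3: "psd (B' + A')" using assms psd_add by blast
  have p4: "psd (B'' + A'')" using assms psd_add by blast
  have hH3: "hermitian H3" "psd H3" "invertible H3"
    using assms p3 invertible_one_plus[OF p3]
    by (simp_all add: H3_def hermitian_add hermitian_one psd_add psd_one add.assoc)
  have hH4: "hermitian H4" "psd H4" "invertible H4"
    using assms p4 invertible_one_plus[OF p4]
    by (simp_all add: H4_def hermitian_add hermitian_one psd_add psd_one add.assoc)
  have hP: "hermitian P" "psd P" using hH1 hermitian_inv psd_inv by (auto simp: P_def)
  have hQ: "hermitian Q" "psd Q" using hH2 hermitian_inv psd_inv by (auto simp: Q_def)
  have hR: "hermitian R" "psd R" using hH3 hermitian_inv psd_inv by (auto simp: R_def)
  have hS: "hermitian S" "psd S" using hH4 hermitian_inv psd_inv by (auto simp: S_def)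
  have d31: "H3 - H1 = B'" by (simp add: H3_def H1_def)
  have d42: "H4 - H2 = B''" by (simp add: H4_def H2_def)
  have d21: "H2 - H1 = X" by (simp add: H2_def H1_def X_def)
  have d43: "H4 - H3 = Z" by (simp add: H4_def H3_def Z_def X_def Y_def algebra_simps)
  have PR: "psd (P - R)" unfolding P_def R_def
    using psd_inv_mono[OF hH1(3,1,2) hH3(3,1)] d31 assms(6) by simp
  have QS: "psd (Q - S)" unfolding Q_def S_def
    using psd_inv_mono[OF hH2(3,1,2) hH4(3,1)] d42 assms(8) by simp
  have hPR: "hermitian (P - R)" using hP hR hermitian_diff by blast
  have hQS: "hermitian (Q - S)" using hQ hS hermitian_diff by blast
  have ePQ: "P - Q = P ** X ** Q" unfolding P_def Q_def using inv_diff[OF hH1(3) hH2(3)] d21 by simp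
  have eRS: "R - S = R ** Z ** S" unfolding R_def S_def using inv_diff[OF hH3(3) hH4(3)] d43 by simp
  define q where "q U V = trace (U ** R ** V ** S)" for U V
  have qnn: "0 \<le> q U U" if "hermitian U" for U
    unfolding q_def using trace_psd_mult[OF psd_sandwich[OF hR(2) that] hS(2,1)] .
  have goal: "trace ((A'' - A') ** (matrix_inv (mat 1 + A') - matrix_inv (mat 1 + A''))
             + (B'' - B') ** (matrix_inv (mat 1 + B' + A') - matrix_inv (mat 1 + B'' + A'')))
       = trace (X ** (P - Q)) + trace (Y ** (R - S))"
    by (simp add: trace_add X_def Y_def P_def Q_def R_def S_def H1_def H2_def H3_def H4_def)
  define t1 where "t1 = trace (X ** (P - R) ** X ** Q)"
  define t2 where "t2 = trace (X ** R ** X ** (Q - S))"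
  have t1: "0 \<le> t1" unfolding t1_def
    using trace_psd_mult[OF psd_sandwich[OF PR hX] hQ(2,1)] .
  have t2: "0 \<le> t2" unfolding t2_def
    using trace_psd_mult[OF psd_sandwich[OF hR(2) hX] QS hQS] by (simp add: matrix_mul_assoc)
  have M: "trace (X ** (P - Q)) = t1 + t2 + q X X"
  proof -
    have "X ** (P - Q) = X ** (P - R) ** X ** Q + X ** R ** X ** (Q - S) + X ** R ** X ** S"
      unfolding ePQ
      by (simp add: matrix_diff_ldistrib matrix_diff_rdistrib matrix_mul_assoc algebra_simps)
    then show ?thesis by (simp add: t1_def t2_def q_def trace_add)
  qed
  have N: "trace (Y ** (R - S)) = q Y X + q Y Y"
    unfolding eRS Z_def q_def
    by (simp add: matrix_add_ldistrib matrix_add_rdistrib matrix_mul_assoc trace_add)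
  have ZZ: "q Z Z = q X X + q X Y + q Y X + q Y Y"
    unfolding Z_def q_def
    by (simp add: matrix_add_ldistrib matrix_add_rdistrib matrix_mul_assoc trace_add)
  have cXY: "cnj (q X Y) = q Y X"
  proof -
    have "cnj (q X Y) = trace (adjoint_mat S ** adjoint_mat (X ** R ** Y))"
      by (simp add: q_def cnj_trace_mult)
    also have "\<dots> = trace (S ** (Y ** R ** X))"
      using hX hY hR hS by (simp add: adjoint_mult hermitian_def matrix_mul_assoc)
    also have "\<dots> = trace (Y ** R ** X ** S)" by (rule trace_mul_sym)
    also have "\<dots> = q Y X" by (simp add: q_def)
    finally show ?thesis .
  qed
  have realN: "Im (trace (Y ** (R - S))) = 0"
  proof -
    have "cnj (trace (Y ** (R - S))) = trace ((R - S) ** Y)"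
      using hY hR hS hermitian_diff[OF hR(1) hS(1)]
      by (simp add: cnj_trace_mult hermitian_def)
    also have "\<dots> = trace (Y ** (R - S))" by (rule trace_mul_sym)
    finally show ?thesis by (simp add: complex_eq_iff)
  qed
  have "Im (q Y Y) = 0" using qnn[OF hY] by (simp add: less_eq_complex_def)
  then have imYX: "Im (q Y X) = 0" using realN N by simp
  have XYe: "q X Y = q Y X"
  proof -
    have "q X Y = cnj (q Y X)" using cXY by (metis complex_cnj_cnj)
    then show ?thesis using imYX by (simp add: complex_eq_iff)
  qed
  have tot: "trace (X ** (P - Q)) + trace (Y ** (R - S)) = t1 + t2 + (q X X + q Y Y + q Z Z) / 2"
    using M N ZZ XYe by (simp add: field_simps)
  have "0 \<le> (q X X + q Y Y + q Z Z) / 2"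
    by (rule cdiv_nonneg) (simp_all add: qnn hX hY hZ add_nonneg_nonneg less_complex_def)
  then show ?thesis unfolding goal tot using t1 t2 by (simp add: add_nonneg_nonneg)
qed


end
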